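(* Let $q=2$. Let $f=\phi(F)$ be a symplectic basis function with $F$ of class $(\rho,\sigma,\tau,\upsilon)\neq(1,0,m-2,0)$ and $\rho>0$. Then there exists $g\in \mathbf F_2\operatorname{Sp}(V)$ such that $gf$ is a function of class $(\rho-1,\sigma,\tau+2,\upsilon)$.
   Context: $k=\mathbf F_2$. $V$ is a $2m$-dimensional $k$-space with nondegenerate alternating form and symplectic basis with coordinate functions $x_1,\dots,x_m,y_m,\dots,y_1$; $\operatorname{Sp}(V)$ acts on functions $V\to k$ by linear substitution (note $x_i^2=x_i$ as functions), extended linearly to the group ring. In $k[X_1,\dots,X_m,Y_1,\dots,Y_m]$ put $W_i=X_iY_i$ and let $Z_i$ denote $X_i$ or $Y_i$. A square-free homogeneous polynomial $F$ is of class $(\rho,\sigma,\tau,\upsilon)$ if there is a partition of $\{1,\dots,m\}$ into $R=\{r_1,\dots,r_\rho\}$, $R'=\{r'_1,\dots,r'_\rho\}$, $S,T,U$ with $|S|=\sigma,|T|=\tau,|U|=\upsilon$ and $F=\prod_{i=1}^\rho(W_{r_i}+W_{r'_i})\prod_{i\in S}W_i\prod_{i\in T}Z_i$; a function is of that class if it equals $\phi(F')$ for some $F'$ of that class, where $\phi$ is evaluation $X_i\mapsto x_i,Y_i\mapsto y_i$. $P^\lambda_\ell$ is the set of such polynomials with $2\rho+2\sigma+\tau=\lambda$ and $\sigma\leq\ell$; choose $B^\lambda_0\subseteq P^\lambda_0$ maximal linearly independent and inductively $B^\lambda_\ell=B^\lambda_{\ell-1}\cup P'^\lambda_\ell$ ($P'^\lambda_\ell\subseteq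 P^\lambda_\ell$) a basis of the span of $P^\lambda_\ell$. For $q=2$ a symplectic basis function is $\phi(F)$ with $F\in B^\lambda_{\lfloor\lambda/2\rfloor}$, $1\le\lambda\le 2m-1$. *)

theory Defs
  imports Complex_Main "HOL-Library.Z2" "HOL-Library.Poly_Mapping" "HOL-Library.FuncSet"
begin

text \<open>Coordinates: Inl i is x_i, Inr i is y_i (1 <= i <= m).  A vector of V is
  a function from coordinates to F_2 = bit, vanishing outside the 2m coordinates.\<close>

type_synonym coord = "nat + nat"
type_synonym vec = "coord \<Rightarrow> bit"

definition coords :: "nat \<Rightarrow> coord set" where
  "coords m = Inl ` {1..m} \<union> Inr ` {1..m}"

definition Vsp :: "nat \<Rightarrow> vec set" where
  "Vsp m = {v. \<forall>j. v j \<noteq> 0 \<longrightarrow> j \<in> coords m}"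

definition vadd :: "vec \<Rightarrow> vec \<Rightarrow> vec" where
  "vadd u w = (\<lambda>j. u j + w j)"

text \<open>Nondegenerate alternating form with symplectic basis e_1..e_m, f_m..f_1,
  coordinate functions x_i, y_i (in characteristic 2 the signs disappear).\<close>
definition omega :: "nat \<Rightarrow> vec \<Rightarrow> vec \<Rightarrow> bit" where
  "omega m u w = (\<Sum>i\<in>{1..m}. u (Inl i) * w (Inr i) + u (Inr i) * w (Inl i))"

text \<open>Sp(V): F_2-linear (= additive) bijections of V preserving the form;
  taken extensional so that Sp(V) is a finite set of functions.\<close>
definition Sp :: "nat \<Rightarrow> (vec \<Rightarrow> vec) set" where
  "Sp m = {h. bij_betw h (Vsp m) (Vsp m)
             \<and> (\<forall>u\<in>Vsp m. \<forall>w\<in>Vsp m. h (vadd u w) = vadd (h u) (h w))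
             \<and> (\<forall>u\<in>Vsp m. \<forall>w\<in>Vsp m. omega m (h u) (h w) = omega m u w)
             \<and> h \<in> extensional (Vsp m)}"

text \<open>Elements of the group ring F_2 Sp(V) are functions Sp(V) -> F_2 (Sp(V) is
  finite); h acts on a function f : V -> F_2 by linear substitution
  (h f)(v) = f(h^{-1} v), extended linearly.\<close>
definition gr_act :: "nat \<Rightarrow> ((vec \<Rightarrow> vec) \<Rightarrow> bit) \<Rightarrow> (vec \<Rightarrow> bit) \<Rightarrow> (vec \<Rightarrow> bit)" where
  "gr_act m c f = (\<lambda>v. \<Sum>h\<in>Sp m. c h * f (inv_into (Vsp m) h v))"

type_synonym mono = "coord \<Rightarrow>\<^sub>0 nat"
type_synonym poly = "mono \<Rightarrow>\<^sub>0 bit"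

definition Var :: "coord \<Rightarrow> poly" where
  "Var j = Poly_Mapping.single (Poly_Mapping.single j 1) 1"

definition Wp :: "nat \<Rightarrow> poly" where
  "Wp i = Var (Inl i) * Var (Inr i)"

definition phi :: "poly \<Rightarrow> vec \<Rightarrow> bit" where
  "phi F v = (\<Sum>a\<in>Poly_Mapping.keys F.
      Poly_Mapping.lookup F a * (\<Prod>j\<in>Poly_Mapping.keys a. v j ^ Poly_Mapping.lookup a j))"

text \<open>F is of class (rho, sigma, tau, upsilon): R = r`{..<rho}, R' = r'`{..<rho},
  S, T, U partition {1..m}; for i in T, Z_i is X_i if z i, else Y_i.\<close>
definition poly_class :: "nat \<Rightarrow> poly \<Rightarrow> nat \<Rightarrow> nat \<Rightarrow> nat \<Rightarrow> nat \<Rightarrow> bool" where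
  "poly_class m F \<rho> \<sigma> \<tau> \<upsilon> \<longleftrightarrow>
    (\<exists>r r' S T U z.
       inj_on r {..<\<rho>} \<and> inj_on r' {..<\<rho>} \<and>
       r ` {..<\<rho>} \<inter> r' ` {..<\<rho>} = {} \<and>
       r ` {..<\<rho>} \<inter> S = {} \<and> r ` {..<\<rho>} \<inter> T = {} \<and> r ` {..<\<rho>} \<inter> U = {} \<and>
       r' ` {..<\<rho>} \<inter> S = {} \<and> r' ` {..<\<rho>} \<inter> T = {} \<and> r' ` {..<\<rho>} \<inter> U = {} \<and>
       S \<inter> T = {} \<and> S \<inter> U = {} \<and> T \<inter> U = {} \<and>
       r ` {..<\<rho>} \<union> r' ` {..<\<rho>} \<union> S \<union> T \<union> U = {1..m} \<and>
       card S = \<sigma> \<and> card T = \<tau> \<and> card U = \<upsilon> \<and>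
       F = (\<Prod>i<\<rho>. Wp (r i) + Wp (r' i)) * (\<Prod>i\<in>S. Wp i)
             * (\<Prod>i\<in>T. Var (if z i then Inl i else Inr i)))"

definition fun_class :: "nat \<Rightarrow> (vec \<Rightarrow> bit) \<Rightarrow> nat \<Rightarrow> nat \<Rightarrow> nat \<Rightarrow> nat \<Rightarrow> bool" where
  "fun_class m f \<rho> \<sigma> \<tau> \<upsilon> \<longleftrightarrow>
    (\<exists>F'. poly_class m F' \<rho> \<sigma> \<tau> \<upsilon> \<and> (\<forall>v\<in>Vsp m. f v = phi F' v))"

definition Pset :: "nat \<Rightarrow> nat \<Rightarrow> nat \<Rightarrow> poly set" where
  "Pset m lam l = {F. \<exists>\<rho> \<sigma> \<tau> \<upsilon>. poly_class m F \<rho> \<sigma> \<tau> \<upsilon> \<and>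
                        2*\<rho> + 2*\<sigma> + \<tau> = lam \<and> \<sigma> \<le> l}"

definition pscale :: "bit \<Rightarrow> poly \<Rightarrow> poly" where
  "pscale c p = Poly_Mapping.map (\<lambda>a. c * a) p"

abbreviation pspan :: "poly set \<Rightarrow> poly set" where
  "pspan \<equiv> module.span pscale"

abbreviation pindep :: "poly set \<Rightarrow> bool" where
  "pindep A \<equiv> \<not> module.dependent pscale A"

text \<open>B is an admissible choice of the sets B^lambda_l, 0 <= l <= floor(lambda/2):
  B^lambda_0 a maximal linearly independent subset of P^lambda_0, and
  B^lambda_l = B^lambda_(l-1) \<union> P' with P' \<subseteq> P^lambda_l, a basis of span P^lambda_l.\<close>
definition basis_choice :: "nat \<Rightarrow> nat \<Rightarrow> (nat \<Rightarrow> poly set) \<Rightarrow> bool" where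
  "basis_choice m lam B \<longleftrightarrow>
     B 0 \<subseteq> Pset m lam 0 \<and> pindep (B 0) \<and>
     (\<forall>p\<in>Pset m lam 0. p \<notin> B 0 \<longrightarrow> \<not> pindep (insert p (B 0))) \<and>
     (\<forall>l. 1 \<le> l \<and> l \<le> lam div 2 \<longrightarrow>
        (\<exists>P'. P' \<subseteq> Pset m lam l \<and> B l = B (l - 1) \<union> P' \<and>
              pindep (B l) \<and> pspan (B l) = pspan (Pset m lam l)))"

definition symplectic_basis_poly :: "nat \<Rightarrow> (nat \<Rightarrow> nat \<Rightarrow> poly set) \<Rightarrow> poly \<Rightarrow> bool" where
  "symplectic_basis_poly m B F \<longleftrightarrow>
     (\<exists>lam. 1 \<le> lam \<and> lam \<le> 2*m - 1 \<and> F \<in> B lam (lam div 2))"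

end

theory Submission
  imports Defs
begin

declare add_bit_eq_xor[simp del] mult_bit_eq_and[simp del]

definition mono_ev :: "mono \<Rightarrow> vec \<Rightarrow> bit" where
  "mono_ev a v = (\<Prod>j\<in>Poly_Mapping.keys a. v j ^ Poly_Mapping.lookup a j)"

lemma phi_alt: "phi F v = (\<Sum>a\<in>Poly_Mapping.keys F. Poly_Mapping.lookup F a * mono_ev a v)"
  by (simp add: phi_def mono_ev_def)

lemma phi_add: "phi (p + q) v = phi p v + phi q v"
  unfolding phi_alt
  by (rule setsum_keys_plus_distrib) (auto simp: distrib_right)

lemma phi_zero[simp]: "phi 0 v = 0" by (simp add: phi_def)

lemma phi_single: "phi (Poly_Mapping.single a c) v = c * mono_ev a v"
  by (cases "c = 0") (simp_all add: phi_alt)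

lemma keys_add_nat: "Poly_Mapping.keys (a + b :: mono) = Poly_Mapping.keys a \<union> Poly_Mapping.keys b"
  by (auto simp: in_keys_iff lookup_add)

lemma mono_ev_sup:
  assumes "finite K" "Poly_Mapping.keys a \<subseteq> K"
  shows "mono_ev a v = (\<Prod>j\<in>K. v j ^ Poly_Mapping.lookup a j)"
  unfolding mono_ev_def
  by (rule prod.mono_neutral_left[OF assms(1,2)]) (auto simp: in_keys_iff simp del: power_bit_unfold)

lemma mono_ev_add: "mono_ev (a + b) v = mono_ev a v * mono_ev b v"
proof -
  let ?K = "Poly_Mapping.keys a \<union> Poly_Mapping.keys b"
  have "mono_ev (a+b) v = (\<Prod>j\<in>?K. v j ^ Poly_Mapping.lookup (a+b) j)"
    by (rule mono_ev_sup) (auto simp: keys_add_nat)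
  also have "\<dots> = (\<Prod>j\<in>?K. v j ^ Poly_Mapping.lookup a j * v j ^ Poly_Mapping.lookup b j)"
    by (simp add: lookup_add power_add del: power_bit_unfold)
  also have "\<dots> = mono_ev a v * mono_ev b v"
  proof -
    have "mono_ev a v = (\<Prod>j\<in>?K. v j ^ Poly_Mapping.lookup a j)" by (rule mono_ev_sup) auto
    moreover have "mono_ev b v = (\<Prod>j\<in>?K. v j ^ Poly_Mapping.lookup b j)" by (rule mono_ev_sup) auto
    ultimately show ?thesis by (simp add: prod.distrib del: power_bit_unfold)
  qed
  finally show ?thesis .
qed

lemma update_eq_add: "a \<notin> Poly_Mapping.keys f \<Longrightarrow> Poly_Mapping.update a b f = f + Poly_Mapping.single a b"
  by (rule poly_mapping_eqI) (auto simp: lookup_update lookup_add lookup_single in_keys_iff)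

lemma phi_single_mult: "phi (Poly_Mapping.single a c * q) v = c * mono_ev a v * phi q v"
proof (induction q rule: update_induct)
  case const then show ?case by simp
next
  case (update f b d)
  show ?case using update
    by (simp add: update_eq_add distrib_left phi_add mult_single phi_single mono_ev_add algebra_simps)
qed

lemma phi_mult: "phi (p * q) v = phi p v * phi q v"
proof (induction p rule: update_induct)
  case const then show ?case by simp
next
  case (update f b d)
  show ?case using update
    by (simp only: update_eq_add[OF update(1)] distrib_right phi_add phi_single_mult phi_single)
qed

lemma phi_one[simp]: "phi 1 v = 1"
  by (simp add: phi_alt mono_ev_def)

lemma phi_Var[simp]: "phi (Var j) v = v j"
  by (simp add: Var_def phi_single mono_ev_def)

lemma phi_Wp[simp]: "phi (Wp i) v = v (Inl i) * v (Inr i)"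
  by (simp add: Wp_def phi_mult)

lemma phi_prod: "phi (\<Prod>i\<in>A. P i) v = (\<Prod>i\<in>A. phi (P i) v)"
  by (induction A rule: infinite_finite_induct) (simp_all add: phi_mult)




definition lc :: "(nat \<Rightarrow> nat) \<Rightarrow> nat \<Rightarrow> coord" where
  "lc p c = (if c < 3 then Inl (p c) else Inr (p (c - 3)))"

definition lmap :: "nat \<Rightarrow> (nat \<Rightarrow> nat) \<Rightarrow> (nat \<Rightarrow> nat \<Rightarrow> bit) \<Rightarrow> vec \<Rightarrow> vec" where
  "lmap m p M v = (if v \<in> Vsp m then (\<lambda>j. if j \<in> lc p ` {..<6}
       then (\<Sum>d<6. M (THE c. c < 6 \<and> lc p c = j) d * v (lc p d)) else v j) else undefined)"

definition mm :: "(nat \<Rightarrow> nat \<Rightarrow> bit) \<Rightarrow> (nat \<Rightarrow> nat \<Rightarrow> bit) \<Rightarrow> nat \<Rightarrow> nat \<Rightarrow> bit" where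
  "mm M N c e = (\<Sum>d<6. M c d * N d e)"

definition idm :: "nat \<Rightarrow> nat \<Rightarrow> bit" where "idm c d = (if c = d then 1 else 0)"

locale loc3 =
  fixes m :: nat and p :: "nat \<Rightarrow> nat"
  assumes pinj: "inj_on p {..<3}" and prange: "p ` {..<3} \<subseteq> {1..m}"
begin

lemma lc_inj: "inj_on (lc p) {..<6}"
proof (rule inj_onI)
  fix c d assume c: "c \<in> {..<6}" and d: "d \<in> {..<6}" and eq: "lc p c = lc p d"
  show "c = d"
  proof (cases "c < 3")
    case True
    then have "d < 3" using eq by (auto simp: lc_def split: if_splits)
    then show ?thesis using True eq pinj by (auto simp: lc_def inj_on_def)
  next
    case False
    then have "\<not> d < 3" using eq by (auto simp: lc_def split: if_splits)
    then have "c - 3 = d - 3" using False eq pinj c d by (auto simp: lc_def inj_on_def)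
    then show ?thesis using False \<open>\<not> d < 3\<close> by simp
  qed
qed

lemma lc_coords: "c < 6 \<Longrightarrow> lc p c \<in> coords m"
proof -
  assume c: "c < 6"
  have "c < 3 \<Longrightarrow> p c \<in> {1..m}" using prange c by auto
  moreover have "\<not> c < 3 \<Longrightarrow> p (c - 3) \<in> {1..m}"
  proof -
    assume "\<not> c < 3" then have "c - 3 \<in> {..<3}" using c by simp
    then show ?thesis using prange by blast
  qed
  ultimately show ?thesis by (auto simp: lc_def coords_def)
qed

lemma the_lc: "c < 6 \<Longrightarrow> (THE c'. c' < 6 \<and> lc p c' = lc p c) = c"
  using lc_inj by (auto simp: inj_on_def)

lemma lmap_lc: "v \<in> Vsp m \<Longrightarrow> c < 6 \<Longrightarrow> lmap m p M v (lc p c) = (\<Sum>d<6. M c d * v (lc p d))"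
  by (simp add: lmap_def the_lc)

lemma lmap_other: "v \<in> Vsp m \<Longrightarrow> j \<notin> lc p ` {..<6} \<Longrightarrow> lmap m p M v j = v j"
  by (simp add: lmap_def)

lemma lmap_Vsp: "v \<in> Vsp m \<Longrightarrow> lmap m p M v \<in> Vsp m"
  unfolding Vsp_def
proof (clarify)
  fix j assume v: "\<forall>j. v j \<noteq> 0 \<longrightarrow> j \<in> coords m" and nz: "lmap m p M v j \<noteq> 0"
  show "j \<in> coords m"
  proof (cases "j \<in> lc p ` {..<6}")
    case True then show ?thesis using lc_coords by auto
  next
    case False then show ?thesis using v nz lmap_other[of v j M] by (auto simp: Vsp_def)
  qed
qed

lemma Vsp_ext: "u \<in> Vsp m \<Longrightarrow> w \<in> Vsp m \<Longrightarrow> (\<And>c. c < 6 \<Longrightarrow> u (lc p c) = w (lc p c)) \<Longrightarrow>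
   (\<And>j. j \<notin> lc p ` {..<6} \<Longrightarrow> u j = w j) \<Longrightarrow> u = w"
  by (rule ext) (metis imageE lessThan_iff)

lemma lmap_comp: assumes v: "v \<in> Vsp m"
  shows "lmap m p M (lmap m p N v) = lmap m p (mm M N) v"
proof (rule Vsp_ext)
  show "lmap m p M (lmap m p N v) \<in> Vsp m" "lmap m p (mm M N) v \<in> Vsp m" using v lmap_Vsp by auto
next
  fix c :: nat assume c: "c < 6"
  have "lmap m p M (lmap m p N v) (lc p c) = (\<Sum>d<6. M c d * (\<Sum>e<6. N d e * v (lc p e)))"
    using v c lmap_Vsp by (simp add: lmap_lc)
  also have "\<dots> = (\<Sum>d<6. \<Sum>e<6. M c d * N d e * v (lc p e))"
    by (simp add: sum_distrib_left mult.assoc)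
  also have "\<dots> = (\<Sum>e<6. \<Sum>d<6. M c d * N d e * v (lc p e))"
    by (rule sum.swap)
  also have "\<dots> = (\<Sum>e<6. mm M N c e * v (lc p e))"
    by (simp add: mm_def sum_distrib_right)
  finally show "lmap m p M (lmap m p N v) (lc p c) = lmap m p (mm M N) v (lc p c)"
    using v c by (simp add: lmap_lc)
next
  fix j assume "j \<notin> lc p ` {..<6}"
  then show "lmap m p M (lmap m p N v) j = lmap m p (mm M N) v j"
    using v lmap_Vsp by (simp add: lmap_other)
qed

lemma lmap_id: assumes v: "v \<in> Vsp m" shows "lmap m p idm v = v"
proof (rule Vsp_ext)
  fix c :: nat assume "c < 6" then show "lmap m p idm v (lc p c) = v (lc p c)"
  proof -
    assume c: "c < 6"
    have "(\<Sum>d<6. idm c d * v (lc p d)) = (\<Sum>d<6. if c = d then v (lc p d) else 0)"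
      by (rule sum.cong) (auto simp: idm_def)
    then show ?thesis using v c by (simp add: lmap_lc)
  qed
qed (use v lmap_Vsp lmap_other in auto)

lemma bit_add_nz: "(x::bit) + y \<noteq> 0 \<Longrightarrow> x \<noteq> 0 \<or> y \<noteq> 0" by auto

lemma vadd_Vsp: "u \<in> Vsp m \<Longrightarrow> w \<in> Vsp m \<Longrightarrow> vadd u w \<in> Vsp m"
  unfolding Vsp_def vadd_def using bit_add_nz by blast

lemma lmap_add: assumes u: "u \<in> Vsp m" and w: "w \<in> Vsp m"
  shows "lmap m p M (vadd u w) = vadd (lmap m p M u) (lmap m p M w)"
proof -
  have uw: "vadd u w \<in> Vsp m" using u w by (rule vadd_Vsp)
  have uw2: "vadd (lmap m p M u) (lmap m p M w) \<in> Vsp m"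
    using u w lmap_Vsp vadd_Vsp by auto
  show ?thesis
  proof (rule Vsp_ext[OF lmap_Vsp[OF uw] uw2])
    fix c :: nat assume "c < 6" then show "lmap m p M (vadd u w) (lc p c) = vadd (lmap m p M u) (lmap m p M w) (lc p c)"
      using u w uw by (simp add: lmap_lc vadd_def distrib_left sum.distrib)
  next
    fix j assume "j \<notin> lc p ` {..<6}" then show "lmap m p M (vadd u w) j = vadd (lmap m p M u) (lmap m p M w) j"
      using u w uw by (simp add: lmap_other vadd_def)
  qed
qed

end



definition om6 :: "(nat \<Rightarrow> bit) \<Rightarrow> (nat \<Rightarrow> bit) \<Rightarrow> bit" where
  "om6 x y = (\<Sum>c<3. x c * y (c+3) + x (c+3) * y c)"

definition Jm :: "nat \<Rightarrow> nat \<Rightarrow> bit" where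
  "Jm e f = (if f = e + 3 \<or> e = f + 3 then 1 else 0)"

definition spres :: "(nat \<Rightarrow> nat \<Rightarrow> bit) \<Rightarrow> bool" where
  "spres M \<longleftrightarrow> (\<forall>e<6. \<forall>f<6. (\<Sum>c<3. M c e * M (c+3) f + M (c+3) e * M c f) = Jm e f)"

lemma sum6: "(\<Sum>c<6. (g::nat\<Rightarrow>_) c) = g 0 + g 1 + g 2 + g 3 + g 4 + (g 5 :: 'a::comm_monoid_add)"
  by (simp add: numeral_eq_Suc lessThan_Suc add_ac)
lemma sum3: "(\<Sum>c<3. (g::nat\<Rightarrow>_) c) = g 0 + g 1 + (g 2 :: 'a::comm_monoid_add)"
  by (simp add: numeral_eq_Suc lessThan_Suc add_ac)

lemma om6_J: "om6 x y = (\<Sum>e<6. \<Sum>f<6. x e * y f * Jm e f)"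
  by (simp add: om6_def sum6 sum3 Jm_def)

lemma om6_mat:
  assumes S: "spres M"
    and x': "\<And>c. c < 6 \<Longrightarrow> x' c = (\<Sum>d<6. M c d * x d)"
    and y': "\<And>c. c < 6 \<Longrightarrow> y' c = (\<Sum>d<6. M c d * y d)"
  shows "om6 x' y' = om6 x y"
proof -
  have "om6 x' y' = (\<Sum>c<3. (\<Sum>e<6. M c e * x e) * (\<Sum>f<6. M (c+3) f * y f)
                        + (\<Sum>e<6. M (c+3) e * x e) * (\<Sum>f<6. M c f * y f))"
    unfolding om6_def by (rule sum.cong) (simp_all add: x' y')
  also have "\<dots> = (\<Sum>c<3. \<Sum>e<6. \<Sum>f<6. x e * y f * (M c e * M (c+3) f + M (c+3) e * M c f))"
  proof -
    have e1: "\<And>c. (\<Sum>e<6. M c e * x e) * (\<Sum>f<6. M (c+3) f * y f) = (\<Sum>e<6. \<Sum>f<6. x e * y f * (M c e * M (c+3) f))"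
      by (simp add: sum_product mult_ac)
    have e2: "\<And>c. (\<Sum>e<6. M (c+3) e * x e) * (\<Sum>f<6. M c f * y f) = (\<Sum>e<6. \<Sum>f<6. x e * y f * (M (c+3) e * M c f))"
      by (subst sum.swap) (simp add: sum_product mult_ac)
    show ?thesis by (simp only: e1 e2 distrib_left sum.distrib)
  qed
  also have "\<dots> = (\<Sum>e<6. \<Sum>c<3. \<Sum>f<6. x e * y f * (M c e * M (c+3) f + M (c+3) e * M c f))"
    by (rule sum.swap)
  also have "\<dots> = (\<Sum>e<6. \<Sum>f<6. \<Sum>c<3. x e * y f * (M c e * M (c+3) f + M (c+3) e * M c f))"
    by (rule sum.cong, simp, rule sum.swap)
  also have "\<dots> = (\<Sum>e<6. \<Sum>f<6. x e * y f * Jm e f)"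
    using S unfolding spres_def by (auto simp: sum_distrib_left[symmetric] intro!: sum.cong)
  also have "\<dots> = om6 x y" by (simp add: om6_J)
  finally show ?thesis .
qed

context loc3 begin

lemma omega_split: assumes "u \<in> Vsp m" "w \<in> Vsp m"
  shows "omega m u w = om6 (\<lambda>c. u (lc p c)) (\<lambda>c. w (lc p c))
     + (\<Sum>i\<in>{1..m} - p ` {..<3}. u (Inl i) * w (Inr i) + u (Inr i) * w (Inl i))"
proof -
  let ?t = "\<lambda>i. u (Inl i) * w (Inr i) + u (Inr i) * w (Inl i)"
  have "omega m u w = sum ?t ({1..m} - p ` {..<3}) + sum ?t (p ` {..<3})"
    unfolding omega_def using prange by (simp add: sum.subset_diff)
  also have "sum ?t (p ` {..<3}) = (\<Sum>c<3. ?t (p c))"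
    using pinj by (simp add: sum.reindex)
  also have "\<dots> = om6 (\<lambda>c. u (lc p c)) (\<lambda>c. w (lc p c))"
    unfolding om6_def by (rule sum.cong) (auto simp: lc_def)
  finally show ?thesis by (simp add: add.commute)
qed

lemma lmap_omega: assumes S: "spres M" and u: "u \<in> Vsp m" and w: "w \<in> Vsp m"
  shows "omega m (lmap m p M u) (lmap m p M w) = omega m u w"
proof -
  have r: "lmap m p M v (Inl i) = v (Inl i) \<and> lmap m p M v (Inr i) = v (Inr i)"
    if "v \<in> Vsp m" "i \<in> {1..m} - p ` {..<3}" for v i
  proof -
    have "Inl i \<notin> lc p ` {..<6}" "Inr i \<notin> lc p ` {..<6}"
      using that(2) by (auto simp: lc_def split: if_splits)
    then show ?thesis using that lmap_other by auto
  qed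
  show ?thesis
    apply (simp add: omega_split u w lmap_Vsp)
    apply (rule arg_cong2[where f="(+)"])
     apply (rule om6_mat[OF S]; simp add: lmap_lc u w)
    apply (rule sum.cong; simp add: r u w)
    done
qed

end



lemma lt6: "(e::nat) < 6 \<longleftrightarrow> e=0 \<or> e=1 \<or> e=2 \<or> e=3 \<or> e=4 \<or> e=5" by arith
lemma all6: "(\<forall>e<6. P e) \<longleftrightarrow> P 0 \<and> P 1 \<and> P 2 \<and> P 3 \<and> P 4 \<and> P (5::nat)"
  unfolding lt6 by blast

context loc3 begin
lemma lmap_cong: assumes "\<forall>c<6. \<forall>d<6. M c d = M' c d" "v \<in> Vsp m"
  shows "lmap m p M v = lmap m p M' v"
  by (rule Vsp_ext) (use assms lmap_Vsp lmap_lc lmap_other in auto)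

lemma lmap_Sp:
  assumes S: "spres M" and i1: "\<forall>c<6. \<forall>d<6. mm M N c d = idm c d" and i2: "\<forall>c<6. \<forall>d<6. mm N M c d = idm c d"
  shows "lmap m p M \<in> Sp m" "\<And>v. v \<in> Vsp m \<Longrightarrow> inv_into (Vsp m) (lmap m p M) v = lmap m p N v"
proof -
  have a: "lmap m p M (lmap m p N v) = v" if "v \<in> Vsp m" for v
    using that by (simp add: lmap_comp lmap_cong[OF i1] lmap_id)
  have b: "lmap m p N (lmap m p M v) = v" if "v \<in> Vsp m" for v
    using that by (simp add: lmap_comp lmap_cong[OF i2] lmap_id)
  have bij: "bij_betw (lmap m p M) (Vsp m) (Vsp m)"
    by (rule bij_betw_byWitness[where f'="lmap m p N"]) (use a b lmap_Vsp in auto)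
  show "lmap m p M \<in> Sp m"
    unfolding Sp_def using bij lmap_add lmap_omega[OF S]
    by (auto simp: extensional_def lmap_def)
  show "inv_into (Vsp m) (lmap m p M) v = lmap m p N v" if "v \<in> Vsp m" for v
    by (rule inv_into_f_eq) (use bij bij_betw_def a that lmap_Vsp in auto)
qed
end


definition mat_of :: "nat list list \<Rightarrow> nat \<Rightarrow> nat \<Rightarrow> bit" where
  "mat_of L c d = of_nat (L ! c ! d)"
definition "M1 = mat_of [[0, 0, 1, 0, 0, 0], [0, 1, 0, 0, 0, 0], [1, 0, 0, 0, 0, 0], [1, 0, 0, 0, 0, 1], [0, 0, 0, 0, 1, 0], [1, 0, 1, 1, 0, 0]]"
definition "M2 = mat_of [[0, 0, 1, 0, 0, 0], [0, 1, 0, 0, 0, 0], [1, 0, 1, 0, 0, 0], [1, 0, 0, 1, 0, 1], [0, 0, 0, 0, 1, 0], [1, 0, 0, 1, 0, 0]]"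
definition "M3 = mat_of [[1, 0, 0, 0, 0, 0], [0, 1, 1, 0, 0, 1], [1, 0, 0, 0, 1, 1], [1, 1, 0, 1, 0, 0], [1, 0, 0, 0, 1, 0], [0, 0, 1, 0, 0, 1]]"
definition "M4 = mat_of [[1, 0, 1, 0, 0, 1], [0, 1, 1, 0, 0, 1], [1, 0, 0, 1, 1, 1], [1, 0, 0, 1, 0, 0], [0, 0, 0, 0, 1, 0], [0, 0, 1, 0, 0, 1]]"
definition lin :: "(nat \<Rightarrow> nat \<Rightarrow> bit) \<Rightarrow> (nat \<Rightarrow> bit) \<Rightarrow> nat \<Rightarrow> bit" where
  "lin M x c = (\<Sum>d<6. M c d * x d)"
definition Qf :: "(nat \<Rightarrow> bit) \<Rightarrow> bit" where "Qf y = y 0 * y 3 + y 1 * y 4"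
lemma I1: "Qf (lin M1 x) + Qf (lin M2 x) + Qf (lin M3 x) + Qf (lin M4 x) = x 3 * x 5"
  apply (simp add: Qf_def lin_def sum6 M1_def M2_def M3_def M4_def mat_of_def)
  apply (cases "x 0"; cases "x 1"; cases "x 2"; cases "x 3"; cases "x 4"; cases "x 5")
  apply simp_all
  done

lemma I2: "Qf (lin M1 x) * lin M1 x 2 * lin M1 x 5 + Qf (lin M2 x) * lin M2 x 2 * lin M2 x 5
   + Qf (lin M3 x) * lin M3 x 2 * lin M3 x 5 + Qf (lin M4 x) * lin M4 x 2 * lin M4 x 5 = x 3 * x 5 * (x 1 * x 4)"
  apply (simp add: Qf_def lin_def sum6 M1_def M2_def M3_def M4_def mat_of_def)
  apply (cases "x 0"; cases "x 1"; cases "x 2"; cases "x 3"; cases "x 4"; cases "x 5")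
  apply simp_all
  done


lemma bit_UNIV: "(UNIV :: bit set) = {0, 1}" by auto
lemma finite_coords: "finite (coords m)" by (simp add: coords_def)
lemma finite_Vsp: "finite (Vsp m)"
proof -
  have inj: "inj_on (\<lambda>v. restrict v (coords m)) (Vsp m)"
  proof (rule inj_onI)
    fix u w assume u: "u \<in> Vsp m" and w: "w \<in> Vsp m" and eq: "restrict u (coords m) = restrict w (coords m)"
    show "u = w"
    proof
      fix j show "u j = w j"
      proof (cases "j \<in> coords m")
        case True then show ?thesis using eq by (metis restrict_apply')
      next
        case False
        have "u j = 0" "w j = 0" using u w False unfolding Vsp_def by blast+
        then show ?thesis by simp
      qed
    qed
  qed
  have "(\<lambda>v. restrict v (coords m)) ` Vsp m \<subseteq> PiE (coords m) (\<lambda>_. UNIV)" by auto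
  moreover have "finite (PiE (coords m) (\<lambda>_. UNIV :: bit set))"
    by (rule finite_PiE) (simp_all add: finite_coords bit_UNIV)
  ultimately show ?thesis using finite_imageD[OF _ inj] finite_subset by blast
qed
lemma finite_Sp: "finite (Sp m)"
proof -
  have "Sp m \<subseteq> PiE (Vsp m) (\<lambda>_. Vsp m)"
    by (auto simp: Sp_def PiE_def bij_betw_def)
  moreover have "finite (PiE (Vsp m) (\<lambda>_. Vsp m))" by (rule finite_PiE) (simp_all add: finite_Vsp)
  ultimately show ?thesis by (rule finite_subset)
qed
lemma mult_if01: "(if P then 1 else 0) * (F::bit) = (if P then F else 0)" by simp
lemma gr_act_sum:
  assumes "\<And>i. i < n \<Longrightarrow> hs i \<in> Sp m"
  shows "gr_act m (\<lambda>h. \<Sum>i<n. if h = hs i then 1 else 0) f v = (\<Sum>i<n. f (inv_into (Vsp m) (hs i) v))"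
proof -
  have "gr_act m (\<lambda>h. \<Sum>i<n. if h = hs i then 1 else 0) f v
     = (\<Sum>h\<in>Sp m. \<Sum>i<n. if h = hs i then f (inv_into (Vsp m) h v) else 0)"
    unfolding gr_act_def by (rule sum.cong) (simp_all only: sum_distrib_right mult_if01)
  also have "\<dots> = (\<Sum>i<n. \<Sum>h\<in>Sp m. if h = hs i then f (inv_into (Vsp m) h v) else 0)"
    by (rule sum.swap)
  also have "\<dots> = (\<Sum>i<n. f (inv_into (Vsp m) (hs i) v))"
    by (rule sum.cong) (use assms finite_Sp in auto)
  finally show ?thesis .
qed


definition "N1 = mat_of [[0, 0, 1, 0, 0, 0], [0, 1, 0, 0, 0, 0], [1, 0, 0, 0, 0, 0], [1, 0, 1, 0, 0, 1], [0, 0, 0, 0, 1, 0], [0, 0, 1, 1, 0, 0]]"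
definition "N2 = mat_of [[1, 0, 1, 0, 0, 0], [0, 1, 0, 0, 0, 0], [1, 0, 0, 0, 0, 0], [1, 0, 1, 0, 0, 1], [0, 0, 0, 0, 1, 0], [0, 0, 0, 1, 0, 1]]"
definition "N3 = mat_of [[1, 0, 0, 0, 0, 0], [0, 1, 0, 0, 0, 1], [0, 0, 1, 0, 1, 1], [1, 1, 0, 1, 0, 1], [1, 0, 0, 0, 1, 0], [0, 0, 1, 0, 1, 0]]"
definition "N4 = mat_of [[1, 0, 0, 0, 0, 1], [0, 1, 0, 0, 0, 1], [0, 0, 1, 1, 1, 1], [1, 0, 0, 1, 0, 1], [0, 0, 0, 0, 1, 0], [0, 0, 1, 1, 1, 0]]"

lemmas matdefs = M1_def M2_def M3_def M4_def N1_def N2_def N3_def N4_def mat_of_def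

lemma symp_all: "spres N1" "spres N2" "spres N3" "spres N4"
  by (simp_all add: spres_def all6 sum3 Jm_def matdefs)

lemma inv_all: "\<forall>c<6. \<forall>d<6. mm M1 N1 c d = idm c d" "\<forall>c<6. \<forall>d<6. mm N1 M1 c d = idm c d"
  "\<forall>c<6. \<forall>d<6. mm M2 N2 c d = idm c d" "\<forall>c<6. \<forall>d<6. mm N2 M2 c d = idm c d"
  "\<forall>c<6. \<forall>d<6. mm M3 N3 c d = idm c d" "\<forall>c<6. \<forall>d<6. mm N3 M3 c d = idm c d"
  "\<forall>c<6. \<forall>d<6. mm M4 N4 c d = idm c d" "\<forall>c<6. \<forall>d<6. mm N4 M4 c d = idm c d"
  by (simp_all add: mm_def all6 sum6 idm_def matdefs)




definition Wv :: "nat \<Rightarrow> vec \<Rightarrow> bit" where "Wv i u = u (Inl i) * u (Inr i)"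
definition Ms :: "nat \<Rightarrow> nat \<Rightarrow> nat \<Rightarrow> bit" where
  "Ms i = (if i = 0 then M1 else if i = 1 then M2 else if i = 2 then M3 else M4)"
definition Ns :: "nat \<Rightarrow> nat \<Rightarrow> nat \<Rightarrow> bit" where
  "Ns i = (if i = 0 then N1 else if i = 1 then N2 else if i = 2 then N3 else N4)"
definition g0 :: "nat \<Rightarrow> (nat \<Rightarrow> nat) \<Rightarrow> (vec \<Rightarrow> vec) \<Rightarrow> bit" where
  "g0 m p = (\<lambda>h. \<Sum>i<4. if h = lmap m p (Ns i) then 1 else 0)"

lemma sum4: "(\<Sum>c<4. (g::nat\<Rightarrow>_) c) = g 0 + g 1 + g 2 + (g 3 :: 'a::comm_monoid_add)"
  by (simp add: numeral_eq_Suc lessThan_Suc add_ac)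

lemma ring4: "(q1::bit) * (A + k1 * l1 * B) + q2 * (A + k2 * l2 * B) + q3 * (A + k3 * l3 * B) + q4 * (A + k4 * l4 * B)
  = (q1 + q2 + q3 + q4) * A + (q1 * k1 * l1 + q2 * k2 * l2 + q3 * k3 * l3 + q4 * k4 * l4) * B"
  by (simp add: algebra_simps)

context loc3 begin

lemma Ns_props: "i < 4 \<Longrightarrow> spres (Ns i) \<and> (\<forall>c<6. \<forall>d<6. mm (Ns i) (Ms i) c d = idm c d) \<and> (\<forall>c<6. \<forall>d<6. mm (Ms i) (Ns i) c d = idm c d)"
  using symp_all inv_all by (auto simp: Ns_def Ms_def numeral_eq_Suc less_Suc_eq)

lemma g0_act: assumes v: "v \<in> Vsp m"
  shows "gr_act m (g0 m p) f v = (\<Sum>i<4. f (lmap m p (Ms i) v))"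
proof -
  have "gr_act m (g0 m p) f v = (\<Sum>i<4. f (inv_into (Vsp m) (lmap m p (Ns i)) v))"
    unfolding g0_def
  proof (rule gr_act_sum)
    fix i :: nat assume "i < 4"
    then have h: "spres (Ns i)" "\<forall>c<6. \<forall>d<6. mm (Ns i) (Ms i) c d = idm c d" "\<forall>c<6. \<forall>d<6. mm (Ms i) (Ns i) c d = idm c d"
      using Ns_props by auto
    show "lmap m p (Ns i) \<in> Sp m" by (rule lmap_Sp(1)[OF h])
  qed
  also have "\<dots> = (\<Sum>i<4. f (lmap m p (Ms i) v))"
  proof (rule sum.cong[OF refl])
    fix i :: nat assume "i \<in> {..<4}"
    then have h: "spres (Ns i)" "\<forall>c<6. \<forall>d<6. mm (Ns i) (Ms i) c d = idm c d" "\<forall>c<6. \<forall>d<6. mm (Ms i) (Ns i) c d = idm c d"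
      using Ns_props by auto
    show "f (inv_into (Vsp m) (lmap m p (Ns i)) v) = f (lmap m p (Ms i) v)"
      using lmap_Sp(2)[OF h v] by simp
  qed
  finally show ?thesis .
qed

lemma core:
  assumes v: "v \<in> Vsp m" and p: "p 0 = a" "p 1 = b" "p 2 = k"
    and hf: "\<forall>u\<in>Vsp m. f u = (Wv a u + Wv b u) * (A u + Wv k u * B u)"
    and hA: "\<forall>u\<in>Vsp m. \<forall>M. A (lmap m p M u) = A u"
    and hB: "\<forall>u\<in>Vsp m. \<forall>M. B (lmap m p M u) = B u"
  shows "gr_act m (g0 m p) f v = v (Inr a) * v (Inr k) * (A v + Wv b v * B v)"
proof -
  define x where "x = (\<lambda>d. v (lc p d))"
  have lcs: "lc p 0 = Inl a" "lc p 1 = Inl b" "lc p 2 = Inl k" "lc p 3 = Inr a" "lc p 4 = Inr b" "lc p 5 = Inr k" "lc p (Suc 0) = Inl b"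
    using p by (simp_all add: lc_def)
  have w: "lmap m p M v (lc p c) = lin M x c" if "c < 6" for M c
    using lmap_lc[OF v that] by (simp add: lin_def x_def)
  have fi: "f (lmap m p M v) = Qf (lin M x) * (A v + lin M x 2 * lin M x 5 * B v)" for M
  proof -
    have "f (lmap m p M v) = (Wv a (lmap m p M v) + Wv b (lmap m p M v)) * (A v + Wv k (lmap m p M v) * B v)"
      using hf hA hB v lmap_Vsp by auto
    also have "\<dots> = Qf (lin M x) * (A v + lin M x 2 * lin M x 5 * B v)"
      using w[of 0 M] w[of 1 M] w[of 2 M] w[of 3 M] w[of 4 M] w[of 5 M]
      by (simp add: Wv_def Qf_def lcs del: One_nat_def)
    finally show ?thesis .
  qed
  have "gr_act m (g0 m p) f v = (\<Sum>i<4. f (lmap m p (Ms i) v))" by (rule g0_act[OF v])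
  also have "\<dots> = (Qf (lin M1 x) + Qf (lin M2 x) + Qf (lin M3 x) + Qf (lin M4 x)) * A v +
     (Qf (lin M1 x) * lin M1 x 2 * lin M1 x 5 + Qf (lin M2 x) * lin M2 x 2 * lin M2 x 5
   + Qf (lin M3 x) * lin M3 x 2 * lin M3 x 5 + Qf (lin M4 x) * lin M4 x 2 * lin M4 x 5) * B v"
  proof -
    have "(\<Sum>i<4. f (lmap m p (Ms i) v)) = f (lmap m p M1 v) + f (lmap m p M2 v) + f (lmap m p M3 v) + f (lmap m p M4 v)"
      by (simp add: sum4 Ms_def)
    then show ?thesis by (simp only: fi ring4)
  qed
  also have "\<dots> = x 3 * x 5 * A v + x 3 * x 5 * (x 1 * x 4) * B v" by (simp only: I1 I2)
  also have "\<dots> = v (Inr a) * v (Inr k) * (A v + Wv b v * B v)"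
    by (simp add: x_def lcs Wv_def algebra_simps del: One_nat_def)
  finally show ?thesis .
qed
end



definition Zc :: "(nat \<Rightarrow> bool) \<Rightarrow> nat \<Rightarrow> coord" where "Zc z i = (if z i then Inl i else Inr i)"

definition PF :: "nat \<Rightarrow> (nat \<Rightarrow> nat) \<Rightarrow> (nat \<Rightarrow> nat) \<Rightarrow> nat set \<Rightarrow> nat set \<Rightarrow> (nat \<Rightarrow> bool) \<Rightarrow> poly" where
  "PF n r r' S T z = (\<Prod>i<n. Wp (r i) + Wp (r' i)) * (\<Prod>i\<in>S. Wp i) * (\<Prod>i\<in>T. Var (Zc z i))"

definition partn :: "nat \<Rightarrow> nat \<Rightarrow> (nat \<Rightarrow> nat) \<Rightarrow> (nat \<Rightarrow> nat) \<Rightarrow> nat set \<Rightarrow> nat set \<Rightarrow> nat set \<Rightarrow> bool" where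
  "partn m \<rho> r r' S T U \<longleftrightarrow>
       inj_on r {..<\<rho>} \<and> inj_on r' {..<\<rho>} \<and>
       r ` {..<\<rho>} \<inter> r' ` {..<\<rho>} = {} \<and>
       r ` {..<\<rho>} \<inter> S = {} \<and> r ` {..<\<rho>} \<inter> T = {} \<and> r ` {..<\<rho>} \<inter> U = {} \<and>
       r' ` {..<\<rho>} \<inter> S = {} \<and> r' ` {..<\<rho>} \<inter> T = {} \<and> r' ` {..<\<rho>} \<inter> U = {} \<and>
       S \<inter> T = {} \<and> S \<inter> U = {} \<and> T \<inter> U = {} \<and>
       r ` {..<\<rho>} \<union> r' ` {..<\<rho>} \<union> S \<union> T \<union> U = {1..m}"

lemma poly_class_iff: "poly_class m F \<rho> \<sigma> \<tau> \<upsilon> \<longleftrightarrow>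
  (\<exists>r r' S T U z. partn m \<rho> r r' S T U \<and> card S = \<sigma> \<and> card T = \<tau> \<and> card U = \<upsilon> \<and> F = PF \<rho> r r' S T z)"
  unfolding poly_class_def partn_def PF_def Zc_def by blast

lemma phi_PF: "phi (PF n r r' S T z) u =
   (\<Prod>i<n. Wv (r i) u + Wv (r' i) u) * (\<Prod>i\<in>S. Wv i u) * (\<Prod>i\<in>T. u (Zc z i))"
  by (simp add: PF_def phi_mult phi_prod phi_add Wv_def)

definition dep_out :: "nat set \<Rightarrow> (vec \<Rightarrow> bit) \<Rightarrow> bool" where
  "dep_out K A \<longleftrightarrow> (\<forall>u w. (\<forall>i. i \<notin> K \<longrightarrow> u (Inl i) = w (Inl i) \<and> u (Inr i) = w (Inr i)) \<longrightarrow> A u = A w)"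

lemma dep_mult: assumes a: "dep_out K A" and b: "dep_out K B" shows "dep_out K (\<lambda>u. A u * B u)"
  unfolding dep_out_def
proof (intro allI impI)
  fix u w :: vec assume h: "\<forall>i. i \<notin> K \<longrightarrow> u (Inl i) = w (Inl i) \<and> u (Inr i) = w (Inr i)"
  have "A u = A w" "B u = B w" using a b h unfolding dep_out_def by blast+
  then show "A u * B u = A w * B w" by simp
qed
lemma dep_add: assumes a: "dep_out K A" and b: "dep_out K B" shows "dep_out K (\<lambda>u. A u + B u)"
  unfolding dep_out_def
proof (intro allI impI)
  fix u w :: vec assume h: "\<forall>i. i \<notin> K \<longrightarrow> u (Inl i) = w (Inl i) \<and> u (Inr i) = w (Inr i)"
  have "A u = A w" "B u = B w" using a b h unfolding dep_out_def by blast+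
  then show "A u + B u = A w + B w" by simp
qed
lemma dep_const: "dep_out K (\<lambda>u. c)" unfolding dep_out_def by simp
lemma dep_Wv: "i \<notin> K \<Longrightarrow> dep_out K (Wv i)" unfolding dep_out_def Wv_def by auto
lemma dep_prod: "(\<And>i. i \<in> I \<Longrightarrow> dep_out K (f i)) \<Longrightarrow> dep_out K (\<lambda>u. \<Prod>i\<in>I. f i u)"
  unfolding dep_out_def
proof (intro allI impI)
  fix u w :: vec assume h: "\<forall>i. i \<notin> K \<longrightarrow> u (Inl i) = w (Inl i) \<and> u (Inr i) = w (Inr i)"
  assume a: "\<And>i. i \<in> I \<Longrightarrow> \<forall>u w. (\<forall>i. i \<notin> K \<longrightarrow> u (Inl i) = w (Inl i) \<and> u (Inr i) = w (Inr i)) \<longrightarrow> f i u = f i w"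
  show "(\<Prod>i\<in>I. f i u) = (\<Prod>i\<in>I. f i w)" by (rule prod.cong) (use a h in auto)
qed
lemma dep_Z: "i \<notin> K \<Longrightarrow> dep_out K (\<lambda>u. u (Zc z i))" unfolding dep_out_def Zc_def by auto

context loc3 begin
lemma lmap_fix: assumes "v \<in> Vsp m" "i \<notin> p ` {..<3}"
  shows "lmap m p M v (Inl i) = v (Inl i) \<and> lmap m p M v (Inr i) = v (Inr i)"
proof -
  have "Inl i \<notin> lc p ` {..<6}" "Inr i \<notin> lc p ` {..<6}"
    using assms(2) by (auto simp: lc_def split: if_splits)
  then show ?thesis using assms lmap_other by auto
qed

lemma dep_lmap: "dep_out (p ` {..<3}) A \<Longrightarrow> v \<in> Vsp m \<Longrightarrow> A (lmap m p M v) = A v"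
  unfolding dep_out_def using lmap_fix by blast
end


lemma finish:
  assumes k: "k \<in> {1..m}" and a: "a \<in> {1..m}" and b: "b \<in> {1..m}" and d: "a \<noteq> b" "a \<noteq> k" "b \<noteq> k"
    and F': "poly_class m F' n \<sigma> \<tau>' \<upsilon>"
    and hF: "\<forall>u\<in>Vsp m. phi F u = (Wv a u + Wv b u) * (A u + Wv k u * B u)"
    and hF': "\<forall>u\<in>Vsp m. phi F' u = u (Inr a) * u (Inr k) * (A u + Wv b u * B u)"
    and dA: "dep_out {a,b,k} A" and dB: "dep_out {a,b,k} B"
  shows "\<exists>g. fun_class m (gr_act m g (phi F)) n \<sigma> \<tau>' \<upsilon>"
proof -
  define p where "p = (\<lambda>i::nat. if i = 0 then a else if i = 1 then b else k)"
  have lt3: "{..<3::nat} = {0,1,2}" by auto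
  have pim: "p ` {..<3} = {a,b,k}" by (auto simp: p_def lt3)
  have L: "loc3 m p"
  proof
    show "inj_on p {..<3}" using d by (auto simp: inj_on_def p_def lt3)
    show "p ` {..<3} \<subseteq> {1..m}" using pim a b k by simp
  qed
  have p012: "p 0 = a" "p 1 = b" "p 2 = k" by (simp_all add: p_def)
  have "\<forall>v\<in>Vsp m. gr_act m (g0 m p) (phi F) v = phi F' v"
  proof
    fix v assume v: "v \<in> Vsp m"
    have "gr_act m (g0 m p) (phi F) v = v (Inr a) * v (Inr k) * (A v + Wv b v * B v)"
    proof (rule loc3.core[OF L v p012 hF])
      show "\<forall>u\<in>Vsp m. \<forall>M. A (lmap m p M u) = A u" using loc3.dep_lmap[OF L] dA pim by auto
      show "\<forall>u\<in>Vsp m. \<forall>M. B (lmap m p M u) = B u" using loc3.dep_lmap[OF L] dB pim by auto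
    qed
    then show "gr_act m (g0 m p) (phi F) v = phi F' v" using hF' v by simp
  qed
  then show ?thesis using F' unfolding fun_class_def by blast
qed




lemma card_T2: "finite T \<Longrightarrow> a \<notin> T \<Longrightarrow> k \<notin> T \<Longrightarrow> a \<noteq> k \<Longrightarrow> card (insert a (insert k T)) = card T + 2"
  by simp
lemma card_swap: "finite U \<Longrightarrow> k \<in> U \<Longrightarrow> b \<notin> U \<Longrightarrow> card (insert b (U - {k})) = card U"
  using card_Diff1_less card.remove by fastforce

lemma prodT': assumes "finite T" "a \<notin> T" "k \<notin> T" "a \<noteq> k"
  shows "(\<Prod>i\<in>insert a (insert k T). u (Zc (z(a := False, k := False)) i)) = u (Inr a) * u (Inr k) * (\<Prod>i\<in>T. u (Zc z i))"
proof -
  have "(\<Prod>i\<in>T. u (Zc (z(a := False, k := False)) i)) = (\<Prod>i\<in>T. u (Zc z i))"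
    by (rule prod.cong) (use assms in \<open>auto simp: Zc_def\<close>)
  then show ?thesis using assms by (simp add: Zc_def mult.assoc)
qed

theorem lemma6p3:
  fixes m \<rho> \<sigma> \<tau> \<upsilon> :: nat and F :: poly and B :: "nat \<Rightarrow> nat \<Rightarrow> poly set"
  assumes "\<forall>lam. basis_choice m lam (B lam)"
    and "symplectic_basis_poly m B F"
    and "poly_class m F \<rho> \<sigma> \<tau> \<upsilon>"
    and "(\<rho>, \<sigma>, \<tau>, \<upsilon>) \<noteq> (1, 0, m - 2, 0)"
    and "\<rho> > 0"
  shows "\<exists>g. fun_class m (gr_act m g (phi F)) (\<rho> - 1) \<sigma> (\<tau> + 2) \<upsilon>"
proof -
  obtain r r' S T U z where P: "partn m \<rho> r r' S T U" and cS: "card S = \<sigma>" and cT: "card T = \<tau>"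
    and cU: "card U = \<upsilon>" and FF: "F = PF \<rho> r r' S T z"
    using assms(3) unfolding poly_class_iff by blast
  obtain n where rho: "\<rho> = Suc n" using assms(5) not0_implies_Suc by blast
  define a where "a = r 0"
  define b where "b = r' 0"
  define X where "X = (\<lambda>i. r (Suc i)) ` {..<n}"
  define X' where "X' = (\<lambda>i. r' (Suc i)) ` {..<n}"
  have lsuc: "{..<Suc n} = insert 0 (Suc ` {..<n})" by (rule lessThan_Suc_eq_insert_0)
  have hR: "r ` {..<\<rho>} = insert a X" unfolding rho lsuc a_def X_def by (simp add: image_image)
  have hR': "r' ` {..<\<rho>} = insert b X'" unfolding rho lsuc b_def X'_def by (simp add: image_image)
  have injr: "inj_on r {..<Suc n}" and injr': "inj_on r' {..<Suc n}" using P rho by (simp_all add: partn_def)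
  have aX: "a \<notin> X" using injr unfolding a_def X_def inj_on_def by force
  have bX': "b \<notin> X'" using injr' unfolding b_def X'_def inj_on_def by force
  have D: "insert a X \<inter> insert b X' = {}" "insert a X \<inter> S = {}" "insert a X \<inter> T = {}" "insert a X \<inter> U = {}"
     "insert b X' \<inter> S = {}" "insert b X' \<inter> T = {}" "insert b X' \<inter> U = {}" "S \<inter> T = {}" "S \<inter> U = {}" "T \<inter> U = {}"
     and Un: "insert a X \<union> insert b X' \<union> S \<union> T \<union> U = {1..m}"
    using P[unfolded partn_def hR hR'] by simp_all
  have sub: "S \<subseteq> {1..m}" "T \<subseteq> {1..m}" "U \<subseteq> {1..m}" using Un by blast+
  have fin: "finite S" "finite T" "finite U" using sub finite_subset by blast+
  have abm: "a \<in> {1..m}" "b \<in> {1..m}" using Un by blast+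
  define Pr where "Pr = (\<lambda>u::vec. \<Prod>i<n. Wv (r (Suc i)) u + Wv (r' (Suc i)) u)"
  define PS where "PS = (\<lambda>u::vec. \<Prod>i\<in>S. Wv i u)"
  define PT where "PT = (\<lambda>u::vec. \<Prod>i\<in>T. u (Zc z i))"
  have phiF: "phi F u = (Wv a u + Wv b u) * (Pr u * PS u * PT u)" for u
    unfolding FF phi_PF rho Pr_def PS_def PT_def a_def b_def by (simp only: prod.lessThan_Suc_shift) (simp add: mult_ac)
  have depPr: "dep_out K Pr" if "K \<inter> (X \<union> X') = {}" for K
    unfolding Pr_def
    by (rule dep_prod, rule dep_add; rule dep_Wv) (use that in \<open>auto simp: X_def X'_def\<close>)
  have depPS: "dep_out K PS" if "K \<inter> S = {}" for K
    unfolding PS_def by (rule dep_prod, rule dep_Wv) (use that in auto)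
  have depPT: "dep_out K PT" if "K \<inter> T = {}" for K
    unfolding PT_def by (rule dep_prod, rule dep_Z) (use that in auto)
  have injs: "inj_on (\<lambda>i. r (Suc i)) {..<n}" "inj_on (\<lambda>i. r' (Suc i)) {..<n}"
    using injr injr' by (auto simp: inj_on_def)
  have rhon: "\<rho> - 1 = n" using rho by simp
  show ?thesis
  proof (cases "U = {}")
    case False
    then obtain k where kU: "k \<in> U" by blast
    define T' where "T' = insert a (insert k T)"
    define U' where "U' = insert b (U - {k})"
    define z' where "z' = z(a := False, k := False)"
    define F' where "F' = PF n (\<lambda>i. r (Suc i)) (\<lambda>i. r' (Suc i)) S T' z'"
    have kn: "k \<noteq> a" "k \<noteq> b" "k \<in> {1..m}" "k \<notin> T" "a \<notin> T"
      using D(4) kU apply blast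
      using D(7) kU apply blast
      using sub(3) kU apply blast
      using D(10) kU apply blast
      using D(3) by blast
    have ab: "a \<noteq> b" using D(1) by blast
    have p1: "X \<inter> X' = {}" using D(1) by blast
    have p2: "X \<inter> S = {}" using D(2) by blast
    have p3: "X \<inter> T' = {}" unfolding T'_def using aX D(4) D(3) kU by blast
    have p4: "X \<inter> U' = {}" unfolding U'_def using D(1) D(4) by blast
    have p5: "X' \<inter> S = {}" using D(5) by blast
    have p6: "X' \<inter> T' = {}" unfolding T'_def using D(1) D(7) D(6) kU by blast
    have p7: "X' \<inter> U' = {}" unfolding U'_def using bX' D(7) by blast
    have p8: "S \<inter> T' = {}" unfolding T'_def using D(2) D(9) D(8) kU by blast
    have p9: "S \<inter> U' = {}" unfolding U'_def using D(5) D(9) by blast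
    have p10: "T' \<inter> U' = {}" unfolding T'_def U'_def using D(4) D(6) D(10) kn(2) ab by blast
    have p11: "X \<union> X' \<union> S \<union> T' \<union> U' = {1..m}" unfolding T'_def U'_def using Un kU by blast
    have pn: "partn m n (\<lambda>i. r (Suc i)) (\<lambda>i. r' (Suc i)) S T' U'"
      unfolding partn_def X_def[symmetric] X'_def[symmetric]
      using injs p1 p2 p3 p4 p5 p6 p7 p8 p9 p10 p11 by (intro conjI)
    have cT': "card T' = \<tau> + 2" unfolding T'_def cT[symmetric] using fin kn by simp
    have "b \<notin> U" using D(7) by blast
    then have cU': "card U' = \<upsilon>" unfolding U'_def cU[symmetric] by (rule card_swap[OF fin(3) kU])
    have pc: "poly_class m F' n \<sigma> (\<tau> + 2) \<upsilon>"
      unfolding poly_class_iff F'_def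
      apply (rule exI[of _ "\<lambda>i. r (Suc i)"], rule exI[of _ "\<lambda>i. r' (Suc i)"], rule exI[of _ S],
             rule exI[of _ T'], rule exI[of _ U'], rule exI[of _ z'])
      using pn cS cT' cU' by simp
    have "\<exists>g. fun_class m (gr_act m g (phi F)) n \<sigma> (\<tau> + 2) \<upsilon>"
    proof (rule finish[OF kn(3) abm _ _ _ pc _ _ dep_mult[OF dep_mult[OF depPr depPS] depPT] dep_const[of _ 0]])
      show "a \<noteq> b" "a \<noteq> k" "b \<noteq> k" using ab kn by auto
      show "\<forall>u\<in>Vsp m. phi F u = (Wv a u + Wv b u) * (Pr u * PS u * PT u + Wv k u * 0)"
        by (simp add: phiF)
      show "\<forall>u\<in>Vsp m. phi F' u = u (Inr a) * u (Inr k) * (Pr u * PS u * PT u + Wv b u * 0)"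
      proof
        fix u :: vec
        have "phi F' u = Pr u * PS u * (\<Prod>i\<in>T'. u (Zc z' i))"
          unfolding F'_def phi_PF Pr_def PS_def by simp
        also have "(\<Prod>i\<in>T'. u (Zc z' i)) = u (Inr a) * u (Inr k) * PT u"
          unfolding T'_def z'_def PT_def by (rule prodT'[OF fin(2) kn(5,4) kn(1)[symmetric]])
        finally show "phi F' u = u (Inr a) * u (Inr k) * (Pr u * PS u * PT u + Wv b u * 0)"
          by (simp add: mult_ac)
      qed
      show "{a, b, k} \<inter> (X \<union> X') = {}" using D(1) D(4) D(7) aX bX' kU by blast
      show "{a, b, k} \<inter> S = {}" using D(2) D(5) D(9) kU by blast
      show "{a, b, k} \<inter> T = {}" using D(3) D(6) D(10) kU by blast
    qed
    then show ?thesis using rhon by simp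
  next
    case Uempty: True
    show ?thesis
    proof (cases "S = {}")
      case False
      then obtain k where kS: "k \<in> S" by blast
      define T' where "T' = insert a (insert k T)"
      define S' where "S' = insert b (S - {k})"
      define z' where "z' = z(a := False, k := False)"
      define F' where "F' = PF n (\<lambda>i. r (Suc i)) (\<lambda>i. r' (Suc i)) S' T' z'"
      define PS2 where "PS2 = (\<lambda>u::vec. \<Prod>i\<in>S - {k}. Wv i u)"
      have kn: "k \<noteq> a" "k \<noteq> b" "k \<in> {1..m}" "k \<notin> T" "a \<notin> T"
        using D(2) kS apply blast
        using D(5) kS apply blast
        using sub(1) kS apply blast
        using D(8) kS apply blast
        using D(3) by blast
      have ab: "a \<noteq> b" using D(1) by blast
      have p1: "X \<inter> X' = {}" using D(1) by blast
      have p2: "X \<inter> S' = {}" unfolding S'_def using D(1) D(2) by blast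
      have p3: "X \<inter> T' = {}" unfolding T'_def using aX D(2) D(3) kS by blast
      have p4: "X \<inter> U = {}" using D(4) by blast
      have p5: "X' \<inter> S' = {}" unfolding S'_def using bX' D(5) by blast
      have p6: "X' \<inter> T' = {}" unfolding T'_def using D(1) D(5) D(6) kS by blast
      have p7: "X' \<inter> U = {}" using D(7) by blast
      have p8: "S' \<inter> T' = {}" unfolding S'_def T'_def using ab kn(2) D(6) D(2) D(8) by blast
      have p9: "S' \<inter> U = {}" unfolding S'_def using D(7) D(9) by blast
      have p10: "T' \<inter> U = {}" unfolding T'_def using D(4) D(9) D(10) kS by blast
      have p11: "X \<union> X' \<union> S' \<union> T' \<union> U = {1..m}" unfolding T'_def S'_def using Un kS by blast
      have pn: "partn m n (\<lambda>i. r (Suc i)) (\<lambda>i. r' (Suc i)) S' T' U"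
        unfolding partn_def X_def[symmetric] X'_def[symmetric]
        using injs p1 p2 p3 p4 p5 p6 p7 p8 p9 p10 p11 by (intro conjI)
      have cT': "card T' = \<tau> + 2" unfolding T'_def cT[symmetric] using fin kn by simp
      have bS: "b \<notin> S" using D(5) by blast
      then have cS': "card S' = \<sigma>" unfolding S'_def cS[symmetric] by (rule card_swap[OF fin(1) kS])
      have pc: "poly_class m F' n \<sigma> (\<tau> + 2) \<upsilon>"
        unfolding poly_class_iff F'_def
        apply (rule exI[of _ "\<lambda>i. r (Suc i)"], rule exI[of _ "\<lambda>i. r' (Suc i)"], rule exI[of _ S'],
               rule exI[of _ T'], rule exI[of _ U], rule exI[of _ z'])
        using pn cS' cT' cU by simp
      have PSk: "PS u = Wv k u * PS2 u" for u
        unfolding PS_def PS2_def using fin(1) kS by (simp add: prod.remove)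
      have "\<exists>g. fun_class m (gr_act m g (phi F)) n \<sigma> (\<tau> + 2) \<upsilon>"
      proof (rule finish[OF kn(3) abm _ _ _ pc _ _ dep_const[of _ 0] dep_mult[OF dep_mult[OF depPr dep_prod[OF dep_Wv]] depPT]])
        show "a \<noteq> b" "a \<noteq> k" "b \<noteq> k" using ab kn by auto
        show "\<forall>u\<in>Vsp m. phi F u = (Wv a u + Wv b u) * (0 + Wv k u * (Pr u * (\<Prod>i\<in>S - {k}. Wv i u) * PT u))"
          by (simp add: phiF PSk PS2_def mult_ac)
        show "\<forall>u\<in>Vsp m. phi F' u = u (Inr a) * u (Inr k) * (0 + Wv b u * (Pr u * (\<Prod>i\<in>S - {k}. Wv i u) * PT u))"
        proof
          fix u :: vec
          have "phi F' u = Pr u * (\<Prod>i\<in>S'. Wv i u) * (\<Prod>i\<in>T'. u (Zc z' i))"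
            unfolding F'_def phi_PF Pr_def by simp
          also have "(\<Prod>i\<in>T'. u (Zc z' i)) = u (Inr a) * u (Inr k) * PT u"
            unfolding T'_def z'_def PT_def by (rule prodT'[OF fin(2) kn(5,4) kn(1)[symmetric]])
          also have "(\<Prod>i\<in>S'. Wv i u) = Wv b u * (\<Prod>i\<in>S - {k}. Wv i u)"
            unfolding S'_def using fin(1) bS by simp
          finally show "phi F' u = u (Inr a) * u (Inr k) * (0 + Wv b u * (Pr u * (\<Prod>i\<in>S - {k}. Wv i u) * PT u))"
            by (simp add: mult_ac)
        qed
        show "{a, b, k} \<inter> (X \<union> X') = {}" using D(1) D(2) D(5) aX bX' kS by blast
        show "\<And>i. i \<in> S - {k} \<Longrightarrow> i \<notin> {a, b, k}" using D(2) D(5) by blast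
        show "{a, b, k} \<inter> T = {}" using D(3) D(6) D(8) kS by blast
      qed
      then show ?thesis using rhon by simp
    next
      case Sempty: True
      have ab: "a \<noteq> b" using D(1) by blast
      have "n \<noteq> 0"
      proof
        assume n0: "n = 0"
        then have XX: "X = {}" "X' = {}" unfolding X_def X'_def by simp_all
        have "insert a (insert b T) = {1..m}" using Un XX Uempty Sempty by (simp add: insert_commute)
        then have "card T + 2 = m" using fin(2) ab D(3) D(6) by (metis card_T2 card_atLeastAtMost diff_Suc_1 insertCI insert_disjoint(1))
        then have "(\<rho>, \<sigma>, \<tau>, \<upsilon>) = (1, 0, m - 2, 0)"
          using rho n0 cS cT cU Sempty Uempty by auto
        then show False using assms(4) by simp
      qed
      then obtain n' where n': "n = Suc n'" using not0_implies_Suc by blast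
      define k where "k = r (Suc 0)"
      define c where "c = r' (Suc 0)"
      define Y where "Y = (\<lambda>i. r (Suc (Suc i))) ` {..<n'}"
      define Y' where "Y' = (\<lambda>i. r' (Suc (Suc i))) ` {..<n'}"
      have lsuc2: "{..<Suc n'} = insert 0 (Suc ` {..<n'})" by (rule lessThan_Suc_eq_insert_0)
      have hX: "X = insert k Y" unfolding X_def n' lsuc2 k_def Y_def by (simp add: image_image)
      have hX': "X' = insert c Y'" unfolding X'_def n' lsuc2 c_def Y'_def by (simp add: image_image)
      have kY: "k \<notin> Y"
      proof
        assume "k \<in> Y"
        then obtain i where i: "i < n'" "r (Suc 0) = r (Suc (Suc i))" unfolding Y_def k_def by auto
        have "Suc 0 = Suc (Suc i)" by (rule inj_onD[OF injr i(2)]) (use i(1) n' in auto)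
        then show False by simp
      qed
      define T' where "T' = insert a (insert k T)"
      define z' where "z' = z(a := False, k := False)"
      define r2 where "r2 = (\<lambda>i. if i = 0 then b else r (Suc i))"
      define F' where "F' = PF n r2 (\<lambda>i. r' (Suc i)) S T' z'"
      define Pr2 where "Pr2 = (\<lambda>u::vec. \<Prod>i<n'. Wv (r (Suc (Suc i))) u + Wv (r' (Suc (Suc i))) u)"
      have kn: "k \<noteq> a" "k \<noteq> b" "k \<in> {1..m}" "k \<notin> T" "a \<notin> T" "c \<notin> {a, b, k}"
        using aX hX apply blast
        using D(1) hX apply blast
        using Un hX apply blast
        using D(3) hX apply blast
        using D(3) apply blast
        using D(1) hX hX' bX' by blast
      have bY: "b \<notin> Y" using D(1) hX by blast
      have im2: "r2 ` {..<n} = insert b Y"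
        unfolding n' lsuc2 Y_def r2_def by (auto simp: image_image)
      have injr2: "inj_on r2 {..<n}"
        unfolding n' inj_on_def
      proof (intro ballI impI)
        fix i j assume i: "i \<in> {..<Suc n'}" and j: "j \<in> {..<Suc n'}" and e: "r2 i = r2 j"
        show "i = j"
        proof (cases "i = 0"; cases "j = 0")
          assume "i = 0" "j \<noteq> 0"
          then obtain j' where "j = Suc j'" "j' < n'" using j not0_implies_Suc by force
          then show ?thesis using e bY \<open>i = 0\<close> unfolding r2_def Y_def by auto
        next
          assume "i \<noteq> 0" "j = 0"
          then obtain i' where "i = Suc i'" "i' < n'" using i not0_implies_Suc by force
          then show ?thesis using e bY \<open>j = 0\<close> unfolding r2_def Y_def by auto
        next
          assume "i \<noteq> 0" "j \<noteq> 0"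
          then show ?thesis using e injr i j unfolding r2_def inj_on_def n' by auto
        qed simp
      qed
      have p1: "insert b Y \<inter> X' = {}" using bX' D(1) hX by blast
      have p2: "insert b Y \<inter> S = {}" using D(5) D(2) hX by blast
      have p3: "insert b Y \<inter> T' = {}" unfolding T'_def using ab kn(2) D(6) aX hX kY D(3) by blast
      have p4: "insert b Y \<inter> U = {}" using D(7) D(4) hX by blast
      have p5: "X' \<inter> S = {}" using D(5) by blast
      have p6: "X' \<inter> T' = {}" unfolding T'_def using D(1) hX D(6) by blast
      have p7: "X' \<inter> U = {}" using D(7) by blast
      have p8: "S \<inter> T' = {}" unfolding T'_def using D(2) hX D(8) by blast
      have p9: "S \<inter> U = {}" using D(9) by blast
      have p10: "T' \<inter> U = {}" unfolding T'_def using D(4) hX D(10) by blast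
      have p11: "insert b Y \<union> X' \<union> S \<union> T' \<union> U = {1..m}" unfolding T'_def using Un hX by blast
      have pn: "partn m n r2 (\<lambda>i. r' (Suc i)) S T' U"
        unfolding partn_def im2 X'_def[symmetric]
        using injr2 injs(2) p1 p2 p3 p4 p5 p6 p7 p8 p9 p10 p11 by (intro conjI)
      have cT': "card T' = \<tau> + 2" unfolding T'_def cT[symmetric] using fin kn by simp
      have pc: "poly_class m F' n \<sigma> (\<tau> + 2) \<upsilon>"
        unfolding poly_class_iff F'_def
        apply (rule exI[of _ r2], rule exI[of _ "\<lambda>i. r' (Suc i)"], rule exI[of _ S],
               rule exI[of _ T'], rule exI[of _ U], rule exI[of _ z'])
        using pn cS cT' cU by simp
      have PrS: "Pr u = (Wv k u + Wv c u) * Pr2 u" for u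
        unfolding Pr_def Pr2_def n' k_def c_def by (simp only: prod.lessThan_Suc_shift)
      have depC: "dep_out {a, b, k} (\<lambda>u. Pr2 u * PS u * PT u)"
      proof (intro dep_mult)
        show "dep_out {a, b, k} Pr2" unfolding Pr2_def
          by (rule dep_prod, rule dep_add; rule dep_Wv) (use aX bX' D(1) hX hX' kY in \<open>auto simp: Y_def Y'_def\<close>)
        show "dep_out {a, b, k} PS" by (rule depPS) (use D(2) D(5) hX in blast)
        show "dep_out {a, b, k} PT" by (rule depPT) (use D(3) D(6) hX in blast)
      qed
      have "\<exists>g. fun_class m (gr_act m g (phi F)) n \<sigma> (\<tau> + 2) \<upsilon>"
      proof (rule finish[OF kn(3) abm _ _ _ pc _ _ dep_mult[OF dep_Wv[OF kn(6)] depC] depC])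
        show "a \<noteq> b" "a \<noteq> k" "b \<noteq> k" using ab kn by auto
        show "\<forall>u\<in>Vsp m. phi F u = (Wv a u + Wv b u) * (Wv c u * (Pr2 u * PS u * PT u) + Wv k u * (Pr2 u * PS u * PT u))"
          by (simp add: phiF PrS algebra_simps)
        show "\<forall>u\<in>Vsp m. phi F' u = u (Inr a) * u (Inr k) * (Wv c u * (Pr2 u * PS u * PT u) + Wv b u * (Pr2 u * PS u * PT u))"
        proof
          fix u :: vec
          have "(\<Prod>i<n. Wv (r2 i) u + Wv (r' (Suc i)) u) = (Wv b u + Wv c u) * Pr2 u"
            unfolding n' Pr2_def r2_def c_def by (simp only: prod.lessThan_Suc_shift) simp
          then have "phi F' u = (Wv b u + Wv c u) * Pr2 u * PS u * (\<Prod>i\<in>T'. u (Zc z' i))"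
            unfolding F'_def phi_PF PS_def by simp
          also have "(\<Prod>i\<in>T'. u (Zc z' i)) = u (Inr a) * u (Inr k) * PT u"
            unfolding T'_def z'_def PT_def by (rule prodT'[OF fin(2) kn(5,4) kn(1)[symmetric]])
          finally show "phi F' u = u (Inr a) * u (Inr k) * (Wv c u * (Pr2 u * PS u * PT u) + Wv b u * (Pr2 u * PS u * PT u))"
            by (simp add: algebra_simps)
        qed
      qed
      then show ?thesis using rhon by simp
    qed
  qed
qed


end
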